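(* Fix $k\in\{1,\dots,d_n\}$. Let $X_{1k},\dots,X_{n_1k}$ be iid $N(\mu_{1k},\sigma_{1k}^2)$ and $Y_{1k},\dots,Y_{n_2k}$ be iid $N(\mu_{2k},\sigma_{2k}^2)$, the two samples independent, and let $\sigma_0^2=\max\{\sigma_{11}^2,\dots,\sigma_{1d_n}^2,\sigma_{21}^2,\dots,\sigma_{2d_n}^2\}<\infty$. Let $h(x,y)=f(x-y)$ where $f:\mathbb{R}\to\mathbb{R}$ is $L$-Lipschitz continuous, and define \[ T_{11k}=\binom{n_1}{2}^{-1}\sum_{1\le i<j\le n_1}h(X_{ik},X_{jk}),\quad T_{22k}=\binom{n_2}{2}^{-1}\sum_{1\le i<j\le n_2}h(Y_{ik},Y_{jk}),\quad T_{12k}=\frac1{n_1n_2}\sum_{i=1}^{n_1}\sum_{j=1}^{n_2}h(X_{ik},Y_{jk}). \] Then for any $t>0$ there exist positive constants $B_1$ and $B_2$ such that (a) $P[|T_{11k}-E[T_{11k}]|\ge t]\le 2e^{-n_1t^2/B_1}$ and $P[|T_{22k}-E[T_{22k}]|\ge t]\le 2e^{-n_2t^2/B_1}$; (b) $P[|T_{12k}-E[T_{12k}]|\ge t]\le 2e^{-\min\{n_1,n_2\}t^2/B_2}$. *)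

theory Defs
  imports "HOL-Probability.Probability"
begin

text \<open>Two independent Gaussian samples (one fixed coordinate k):
  X_0,...,X_{n1-1} iid N(mu1, s1^2), Y_0,...,Y_{n2-1} iid N(mu2, s2^2),
  all n1+n2 variables jointly independent.  s1, s2 are standard deviations.\<close>
definition two_sample_normal ::
  "'a measure \<Rightarrow> nat \<Rightarrow> nat \<Rightarrow> (nat \<Rightarrow> 'a \<Rightarrow> real) \<Rightarrow> (nat \<Rightarrow> 'a \<Rightarrow> real)
    \<Rightarrow> real \<Rightarrow> real \<Rightarrow> real \<Rightarrow> real \<Rightarrow> bool" where
  "two_sample_normal M n1 n2 X Y mu1 s1 mu2 s2 \<longleftrightarrow>
     prob_space M \<and> 0 < s1 \<and> 0 < s2 \<and>
     (\<forall>i<n1. distributed M lborel (X i) (normal_density mu1 s1)) \<and>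
     (\<forall>j<n2. distributed M lborel (Y j) (normal_density mu2 s2)) \<and>
     prob_space.indep_vars M (\<lambda>_. borel)
        (\<lambda>z. case z of Inl i \<Rightarrow> X i | Inr j \<Rightarrow> Y j) ({..<n1} <+> {..<n2})"

definition T11 :: "(real \<Rightarrow> real) \<Rightarrow> nat \<Rightarrow> (nat \<Rightarrow> 'a \<Rightarrow> real) \<Rightarrow> 'a \<Rightarrow> real" where
  "T11 f n X \<omega> = (\<Sum>i<n. \<Sum>j\<in>{i<..<n}. f (X i \<omega> - X j \<omega>)) / real (n choose 2)"

definition T12 :: "(real \<Rightarrow> real) \<Rightarrow> nat \<Rightarrow> nat \<Rightarrow> (nat \<Rightarrow> 'a \<Rightarrow> real) \<Rightarrow> (nat \<Rightarrow> 'a \<Rightarrow> real) \<Rightarrow> 'a \<Rightarrow> real" where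
  "T12 f n1 n2 X Y \<omega> = (\<Sum>i<n1. \<Sum>j<n2. f (X i \<omega> - Y j \<omega>)) / (real n1 * real n2)"

end

theory Submission
  imports Defs
begin

abbreviation "NM mu sg \<equiv> density lborel (normal_density mu sg)"

lemma nd_shift:
  assumes "0 < sg"
  shows "normal_density mu sg y * exp (a * y) = exp (a*mu + a^2* sg^2/2) * normal_density (mu + a* sg^2) sg y"
proof -
  have e: "-((y - mu)^2) / (2 * sg^2) + a * y = (a*mu + a^2* sg^2/2) + (-((y - (mu + a* sg^2))^2) / (2 * sg^2))"
    using assms by (simp add: field_simps power2_eq_square)
  show ?thesis
    unfolding normal_density_def using e
    by (simp add: mult_exp_exp)
qed

lemma nn_normal_density_1: "0 < sg \<Longrightarrow> (\<integral>\<^sup>+y. ennreal (normal_density mu sg y) \<partial>lborel) = 1"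
  by (simp add: nn_integral_eq_integral normal_density_nonneg)

lemma normal_mgf:
  assumes "0 < sg"
  shows "(\<integral>\<^sup>+y. ennreal (exp (a*y)) \<partial>NM mu sg) = ennreal (exp (a*mu + a^2* sg^2/2))"
proof -
  have "(\<integral>\<^sup>+y. ennreal (exp (a*y)) \<partial>NM mu sg) = (\<integral>\<^sup>+y. ennreal (normal_density mu sg y) * ennreal (exp (a*y)) \<partial>lborel)"
    by (subst nn_integral_density) auto
  also have "\<dots> = (\<integral>\<^sup>+y. ennreal (exp (a*mu + a^2* sg^2/2)) * ennreal (normal_density (mu + a* sg^2) sg y) \<partial>lborel)"
    apply (rule nn_integral_cong)
    using nd_shift[OF assms] normal_density_nonneg
    by (metis ennreal_mult' exp_ge_zero)
  also have "\<dots> = ennreal (exp (a*mu + a^2* sg^2/2))"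
    by (subst nn_integral_cmult) (auto simp: nn_normal_density_1[OF assms])
  finally show ?thesis .
qed


lemma integrable_exp_lin:
  assumes "0 < sg"
  shows "integrable (NM mu sg) (\<lambda>y. exp (a*y))"
  apply (rule integrableI_bounded)
  using normal_mgf[OF assms, where a=a and mu=mu] by auto

lemma abs_le_exps: "\<bar>u::real\<bar> \<le> exp u + exp (-u)"
proof -
  have "u \<le> exp u" "-u \<le> exp (-u)"
    using exp_ge_add_one_self[of u] exp_ge_add_one_self[of "-u"] by linarith+
  moreover have "0 < exp u" "0 < exp (-u)" by simp_all
  ultimately show ?thesis unfolding abs_le_iff by linarith
qed

lemma cosh_abs_eq: "cosh \<bar>u::real\<bar> = cosh u"
  by (cases "u \<ge> 0") (simp_all only: abs_of_nonneg abs_of_neg not_le cosh_minus)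

lemma exp_pm_mono:
  assumes "\<bar>u\<bar> \<le> \<bar>v::real\<bar>"
  shows "exp u + exp (-u) \<le> exp v + exp (-v)"
proof -
  have "cosh \<bar>u\<bar> \<le> cosh \<bar>v\<bar>" by (rule cosh_real_nonneg_le_iff[THEN iffD2]) (use assms in auto)
  then have "cosh u \<le> cosh v" by (simp only: cosh_abs_eq)
  then show ?thesis unfolding cosh_def by simp
qed

lemma lip_measurable:
  assumes "\<And>y y'. \<bar>g y - g y'\<bar> \<le> c * \<bar>y - y'\<bar>"
  shows "(g::real\<Rightarrow>real) \<in> borel_measurable borel"
proof -
  have "(max c 0)-lipschitz_on UNIV g"
    apply (rule lipschitz_onI)
    using assms by (auto simp: dist_real_def intro: order_trans[OF _ mult_right_mono[OF max.cobounded1]])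
  then show ?thesis by (intro borel_measurable_continuous_onI lipschitz_on_continuous_on)
qed


lemma integrable_dom:
  assumes sg: "0 < sg" and hm: "h \<in> borel_measurable borel"
    and bnd: "\<And>y. \<bar>h y\<bar> \<le> A + B * exp (a*y) + C * exp ((-a)*y)"
  shows "integrable (NM mu sg) (h :: real \<Rightarrow> real)"
proof (rule Bochner_Integration.integrable_bound[where f="\<lambda>y. A + B * exp (a*y) + C * exp ((-a)*y)"])
  interpret prob_space "NM mu sg" by (rule prob_space_normal_density[OF sg])
  show "integrable (NM mu sg) (\<lambda>y. A + B * exp (a*y) + C * exp ((-a)*y))"
  proof -
    have i1: "integrable (NM mu sg) (\<lambda>y. B * exp (a*y))" using integrable_exp_lin[OF sg, of mu a] by simp
    have i2: "integrable (NM mu sg) (\<lambda>y. C * exp ((-a)*y))" using integrable_exp_lin[OF sg, of mu "-a"] by simp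
    show ?thesis
      by (intro Bochner_Integration.integrable_add i1 i2 integrable_const)
  qed
  show "h \<in> borel_measurable (NM mu sg)" using hm by simp
  show "AE x in NM mu sg. norm (h x) \<le> norm (A + B * exp (a*x) + C * exp ((-a)*x))"
    using bnd by (auto intro!: AE_I2 order_trans[OF _ abs_ge_self])
qed

lemma eb_aux:
  fixes l m c mu gmu gy y :: real
  assumes c: "0 \<le> c" and g1: "\<bar>gy\<bar> \<le> \<bar>gmu\<bar> + c * \<bar>y - mu\<bar>"
  shows "exp (l * (m - gy)) \<le> (exp (\<bar>l\<bar> * (\<bar>m\<bar> + \<bar>gmu\<bar>)) * exp (-(\<bar>l\<bar>*c*mu))) * exp ((\<bar>l\<bar>*c)*y)
         + (exp (\<bar>l\<bar> * (\<bar>m\<bar> + \<bar>gmu\<bar>)) * exp (\<bar>l\<bar>*c*mu)) * exp ((-(\<bar>l\<bar>*c))*y)"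
proof -
  define K where "K = exp (\<bar>l\<bar> * (\<bar>m\<bar> + \<bar>gmu\<bar>))"
  define v where "v = \<bar>l\<bar>*c*(y - mu)"
  have "l * (m - gy) \<le> \<bar>l\<bar> * \<bar>m - gy\<bar>"
    by (metis abs_ge_self abs_mult)
  also have "\<dots> \<le> \<bar>l\<bar> * (\<bar>m\<bar> + \<bar>gy\<bar>)"
    by (intro mult_left_mono abs_triangle_ineq4) simp
  also have "\<dots> \<le> \<bar>l\<bar> * (\<bar>m\<bar> + \<bar>gmu\<bar> + c * \<bar>y - mu\<bar>)"
    using g1 by (intro mult_left_mono) auto
  also have "\<dots> = \<bar>l\<bar> * (\<bar>m\<bar> + \<bar>gmu\<bar>) + \<bar>v\<bar>"
    unfolding v_def using c by (simp add: abs_mult distrib_left)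
  finally have "exp (l * (m - gy)) \<le> exp (\<bar>l\<bar> * (\<bar>m\<bar> + \<bar>gmu\<bar>) + \<bar>v\<bar>)" by simp
  also have "\<dots> = K * exp \<bar>v\<bar>" unfolding K_def by (rule exp_add)
  also have "\<dots> \<le> K * (exp v + exp (-v))"
    unfolding K_def by (intro mult_left_mono) (cases "v \<ge> 0", auto)
  also have "exp v = exp (-(\<bar>l\<bar>*c*mu)) * exp ((\<bar>l\<bar>*c)*y)"
    unfolding v_def mult_exp_exp by (simp add: algebra_simps)
  also have "exp (-v) = exp (\<bar>l\<bar>*c*mu) * exp ((-(\<bar>l\<bar>*c))*y)"
    unfolding v_def mult_exp_exp by (simp add: algebra_simps)
  finally show ?thesis unfolding K_def by (simp add: algebra_simps)
qed

lemma lip1d: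
  fixes g :: "real \<Rightarrow> real"
  assumes sg: "0 < sg" and c: "0 \<le> c" and lip: "\<And>y y'. \<bar>g y - g y'\<bar> \<le> c * \<bar>y - y'\<bar>"
  shows "integrable (NM mu sg) g"
  and "(\<integral>\<^sup>+y. ennreal (exp (l * (g y - (\<integral>y. g y \<partial>NM mu sg)))) \<partial>NM mu sg) \<le> ennreal (exp (l^2 * c^2 * sg^2))"
proof -
  let ?P = "NM mu sg"
  interpret P: prob_space ?P by (rule prob_space_normal_density[OF sg])
  interpret PP: pair_prob_space ?P ?P ..
  have gm[measurable]: "g \<in> borel_measurable borel" by (rule lip_measurable[OF lip])
  have gb: "\<bar>g y\<bar> \<le> \<bar>g mu\<bar> + c * exp (-mu) * exp (1*y) + c * exp mu * exp ((-1)*y)" for y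
  proof -
    have h1: "\<bar>g y\<bar> \<le> \<bar>g mu\<bar> + c * \<bar>y - mu\<bar>" using lip[of y mu] by linarith
    have "\<bar>y - mu\<bar> \<le> exp (y - mu) + exp (-(y-mu))" by (rule abs_le_exps)
    also have "exp (y - mu) + exp (-(y-mu)) = exp (-mu) * exp (1*y) + exp mu * exp ((-1)*y)"
      by (simp add: mult_exp_exp)
    finally have h2: "\<bar>y - mu\<bar> \<le> exp (-mu) * exp (1*y) + exp mu * exp ((-1)*y)" .
    show ?thesis using mult_left_mono[OF h2 c] h1 by (simp add: algebra_simps)
  qed
  show gi: "integrable ?P g"
    by (rule integrable_dom[OF sg gm gb])
  define m where "m = (\<integral>y. g y \<partial>?P)"
  define E where "E = (\<lambda>u::real. ennreal (exp u))"
  define D where "D = (\<integral>\<^sup>+y. \<integral>\<^sup>+y'. E (l * (g y - g y')) \<partial>?P \<partial>?P)"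
  define D' where "D' = (\<integral>\<^sup>+y. \<integral>\<^sup>+y'. E (l * (g y' - g y)) \<partial>?P \<partial>?P)"
  have step1: "E (l * (g y - m)) \<le> (\<integral>\<^sup>+y'. E (l * (g y - g y')) \<partial>?P)" for y
  proof -
    define K where "K = exp (\<bar>l\<bar> * (\<bar>m\<bar> + \<bar>g mu\<bar>))"
    have eb: "\<bar>exp (l * (m - g y'))\<bar> \<le> 0 + (K * exp (-(\<bar>l\<bar>*c*mu))) * exp ((\<bar>l\<bar>*c)*y')
         + (K * exp (\<bar>l\<bar>*c*mu)) * exp ((-(\<bar>l\<bar>*c))*y')" for y'
      using eb_aux[OF c, of "g y'" "g mu" y' mu l m] lip[of y' mu] unfolding K_def by simp
    have ei: "integrable ?P (\<lambda>y'. exp (l * (m - g y')))"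
      by (rule integrable_dom[OF sg _ eb]) simp
    have "1 = (\<integral>y'. 1 + l * m - l * g y' \<partial>?P)"
      using gi P.prob_space by (simp add: m_def)
    also have "\<dots> \<le> (\<integral>y'. exp (l * (m - g y')) \<partial>?P)"
      apply (rule integral_mono)
      using gi ei apply simp
      using ei apply simp
      using exp_ge_add_one_self[of "l * (m - g _)"] by (simp add: algebra_simps)
    finally have "ennreal 1 \<le> (\<integral>\<^sup>+y'. E (l * (m - g y')) \<partial>?P)"
      unfolding E_def by (subst nn_integral_eq_integral[OF ei]) auto
    then have "E (l * (g y - m)) * 1 \<le> E (l * (g y - m)) * (\<integral>\<^sup>+y'. E (l * (m - g y')) \<partial>?P)"
      by (intro mult_left_mono) auto
    also have "\<dots> = (\<integral>\<^sup>+y'. E (l * (g y - m)) * E (l * (m - g y')) \<partial>?P)"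
      unfolding E_def by (subst nn_integral_cmult) auto
    also have "\<dots> = (\<integral>\<^sup>+y'. E (l * (g y - g y')) \<partial>?P)"
      unfolding E_def by (intro nn_integral_cong) (simp add: ennreal_mult'[symmetric] mult_exp_exp algebra_simps)
    finally show ?thesis by simp
  qed
  have "D = D'"
    unfolding D_def D'_def
    using PP.Fubini'[of "\<lambda>a b. E (l * (g b - g a))"] unfolding E_def by simp
  show "(\<integral>\<^sup>+y. ennreal (exp (l * (g y - (\<integral>y. g y \<partial>NM mu sg)))) \<partial>NM mu sg) \<le> ennreal (exp (l^2 * c^2 * sg^2))"
  proof -
    define a where "a = l * c"
    define Mg where "Mg = (\<lambda>b. E (b*mu + b^2 * sg^2/2))"
    have mgf: "(\<integral>\<^sup>+y. E (b*y) \<partial>?P) = Mg b" for b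
      unfolding E_def Mg_def by (rule normal_mgf[OF sg])
    have mgfn: "(\<integral>\<^sup>+y. ennreal (exp (-(b*y))) \<partial>?P) = Mg (-b)" for b
      using mgf[of "-b"] by (simp add: E_def)
    have MM: "Mg a * Mg (-a) = E (l^2 * c^2 * sg^2)"
      unfolding Mg_def E_def a_def
      by (simp add: ennreal_mult'[symmetric] mult_exp_exp power_mult_distrib algebra_simps)
    have le1: "(\<integral>\<^sup>+y. E (l * (g y - m)) \<partial>?P) \<le> D"
      unfolding D_def by (rule nn_integral_mono) (rule step1)
    have "D + D' = (\<integral>\<^sup>+y. (\<integral>\<^sup>+y'. E (l * (g y - g y')) \<partial>?P) + (\<integral>\<^sup>+y'. E (l * (g y' - g y)) \<partial>?P) \<partial>?P)"
      unfolding D_def D'_def E_def by (subst nn_integral_add) auto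
    also have "\<dots> = (\<integral>\<^sup>+y. (\<integral>\<^sup>+y'. E (l * (g y - g y')) + E (l * (g y' - g y)) \<partial>?P) \<partial>?P)"
      unfolding E_def by (intro nn_integral_cong, subst nn_integral_add) auto
    also have "\<dots> \<le> (\<integral>\<^sup>+y. (\<integral>\<^sup>+y'. E (a*y) * E ((-a)*y') + E ((-a)*y) * E (a*y') \<partial>?P) \<partial>?P)"
    proof (intro nn_integral_mono)
      fix y y'
      have "\<bar>l * (g y - g y')\<bar> \<le> \<bar>a * (y - y')\<bar>"
        unfolding a_def using lip[of y y'] c
        by (simp add: abs_mult mult_left_mono mult.assoc)
      then have "exp (l * (g y - g y')) + exp (- (l * (g y - g y'))) \<le> exp (a * (y - y')) + exp (- (a * (y - y')))"
        by (rule exp_pm_mono)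
      then have "exp (l * (g y - g y')) + exp (l * (g y' - g y)) \<le> exp (a*y) * exp ((-a)*y') + exp ((-a)*y) * exp (a*y')"
        by (simp add: mult_exp_exp algebra_simps)
      then show "E (l * (g y - g y')) + E (l * (g y' - g y)) \<le> E (a*y) * E ((-a)*y') + E ((-a)*y) * E (a*y')"
        unfolding E_def by (simp add: ennreal_mult'[symmetric] ennreal_plus[symmetric] del: ennreal_plus)
    qed
    also have "\<dots> = (\<integral>\<^sup>+y. E (a*y) * Mg (-a) + E ((-a)*y) * Mg a \<partial>?P)"
      apply (intro nn_integral_cong)
      apply (subst nn_integral_add)
        apply (simp add: E_def)
       apply (simp add: E_def)
      apply (simp add: nn_integral_cmult E_def mgf[unfolded E_def] mgfn)
      done
    also have "\<dots> = Mg a * Mg (-a) + Mg (-a) * Mg a"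
      apply (subst nn_integral_add)
        apply (simp add: E_def)
       apply (simp add: E_def)
      apply (simp add: nn_integral_multc E_def mgf[unfolded E_def] mgfn)
      done
    finally have "D + D \<le> E (l^2 * c^2 * sg^2) + E (l^2 * c^2 * sg^2)"
      using \<open>D = D'\<close> MM by (simp add: mult.commute)
    then have "D \<le> E (l^2 * c^2 * sg^2)"
      by (meson add_strict_mono not_le)
    with le1 show ?thesis unfolding E_def m_def by simp
  qed
qed


lemma nn_abs_fin: "integrable M (f::_\<Rightarrow>real) \<Longrightarrow> (\<integral>\<^sup>+x. ennreal \<bar>f x\<bar> \<partial>M) < \<infinity>"
  by (subst nn_integral_eq_integral) (auto intro: integrable_abs)

lemma prod_conc:
  fixes I :: "'i set" and mu sg c :: "'i \<Rightarrow> real" and NN :: "'i \<Rightarrow> real measure"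
  assumes fin: "finite I" and sg: "\<And>i. 0 < sg i" and c: "\<And>i. 0 \<le> c i"
    and NN: "NN = (\<lambda>i. NM (mu i) (sg i))"
    and Fm: "F \<in> borel_measurable (PiM I NN)"
    and Flip: "\<And>x y. x \<in> space (PiM I NN) \<Longrightarrow> y \<in> space (PiM I NN) \<Longrightarrow> \<bar>F x - F y\<bar> \<le> (\<Sum>i\<in>I. c i * \<bar>x i - y i\<bar>)"
  shows "integrable (PiM I NN) F \<and>
     (\<forall>l. (\<integral>\<^sup>+x. ennreal (exp (l * (F x - (\<integral>x. F x \<partial>PiM I NN)))) \<partial>PiM I NN) \<le> ennreal (exp (l^2 * (\<Sum>i\<in>I. (c i)^2 * (sg i)^2))))"
  using fin Fm Flip
proof (induction I arbitrary: F rule: finite_induct)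
  case empty
  have P: "PiM {} NN = count_space {\<lambda>_. undefined}" by (rule PiM_empty)
  show ?case
    unfolding P
    by (simp add: integrable_count_space lebesgue_integral_count_space_finite nn_integral_count_space_finite)
next
  case (insert i I)
  have Fm[measurable]: "F \<in> borel_measurable (PiM (insert i I) NN)" by (rule insert.prems(1))
  note Flip = insert.prems(2)
  have probN: "prob_space (NN j)" for j by (simp add: NN prob_space_normal_density sg)
  interpret PSF: product_sigma_finite NN
    by (simp add: product_sigma_finite_def prob_space_imp_sigma_finite probN)
  interpret Ni: prob_space "NN i" by (rule probN)
  interpret PI: prob_space "PiM I NN" by (rule prob_space_PiM[OF probN])
  have spN: "space (NN j) = UNIV" for j by (simp add: NN)
  have upd_space: "x(i:=y) \<in> space (PiM (insert i I) NN)" if "x \<in> space (PiM I NN)" for x y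
    using that by (auto simp: space_PiM PiE_iff spN extensional_def)
  have sumeq: "(\<Sum>j\<in>insert i I. c j * \<bar>(x(i:=y)) j - (x'(i:=y')) j\<bar>) = c i * \<bar>y - y'\<bar> + (\<Sum>j\<in>I. c j * \<bar>x j - x' j\<bar>)" for x x' y y'
  proof -
    have "(\<Sum>j\<in>I. c j * \<bar>(x(i:=y)) j - (x'(i:=y')) j\<bar>) = (\<Sum>j\<in>I. c j * \<bar>x j - x' j\<bar>)"
      using insert.hyps(2) by (intro sum.cong) auto
    then show ?thesis using insert.hyps by simp
  qed
  have updm[measurable]: "(\<lambda>z. (fst z)(i := snd z)) \<in> measurable (PiM I NN \<Otimes>\<^sub>M NN i) (PiM (insert i I) NN)"
    by (rule measurable_fun_upd[where J=I]) auto
  define G where "G = (\<lambda>x. \<integral>y. F (x(i:=y)) \<partial>NN i)"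
  have glip: "\<bar>F (x(i:=y)) - F (x(i:=y'))\<bar> \<le> c i * \<bar>y - y'\<bar>" if "x \<in> space (PiM I NN)" for x y y'
  proof -
    have "\<bar>F (x(i:=y)) - F (x(i:=y'))\<bar> \<le> (\<Sum>j\<in>insert i I. c j * \<bar>(x(i:=y)) j - (x(i:=y')) j\<bar>)"
      by (rule Flip[OF upd_space[OF that] upd_space[OF that]])
    also have "\<dots> = c i * \<bar>y - y'\<bar>" by (simp only: sumeq) simp
    finally show ?thesis .
  qed
  have gint: "integrable (NN i) (\<lambda>y. F (x(i:=y)))" if "x \<in> space (PiM I NN)" for x
    using lip1d(1)[OF sg[of i] c[of i] glip[OF that], where mu="mu i"] unfolding NN by auto
  have gmgf: "(\<integral>\<^sup>+y. ennreal (exp (l * (F (x(i:=y)) - G x))) \<partial>NN i) \<le> ennreal (exp (l^2 * (c i)^2 * (sg i)^2))"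
    if "x \<in> space (PiM I NN)" for x l
    using lip1d(2)[OF sg[of i] c[of i] glip[OF that], where mu="mu i" and l=l] unfolding G_def NN by auto
  have Gm[measurable]: "G \<in> borel_measurable (PiM I NN)"
  proof -
    have "(\<lambda>z. F ((fst z)(i := snd z))) \<in> borel_measurable (PiM I NN \<Otimes>\<^sub>M NN i)"
      by (rule measurable_compose[OF updm Fm])
    then have "case_prod (\<lambda>x y. F (x(i:=y))) \<in> borel_measurable (PiM I NN \<Otimes>\<^sub>M NN i)"
      by (simp add: case_prod_beta')
    then show ?thesis unfolding G_def by (rule sigma_finite_measure.borel_measurable_lebesgue_integral[OF prob_space_imp_sigma_finite[OF probN]])
  qed
  have Gle: "G x \<le> G x' + (\<Sum>j\<in>I. c j * \<bar>x j - x' j\<bar>)"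
    if x: "x \<in> space (PiM I NN)" and x': "x' \<in> space (PiM I NN)" for x x'
  proof -
    let ?S = "\<Sum>j\<in>I. c j * \<bar>x j - x' j\<bar>"
    have "G x \<le> (\<integral>y. F (x'(i:=y)) + ?S \<partial>NN i)"
      unfolding G_def
    proof (rule integral_mono)
      show "integrable (NN i) (\<lambda>y. F (x(i:=y)))" by (rule gint[OF x])
      show "integrable (NN i) (\<lambda>y. F (x'(i:=y)) + ?S)"
        by (intro Bochner_Integration.integrable_add gint[OF x'] Ni.integrable_const)
      fix y
      have "\<bar>F (x(i:=y)) - F (x'(i:=y))\<bar> \<le> (\<Sum>j\<in>insert i I. c j * \<bar>(x(i:=y)) j - (x'(i:=y)) j\<bar>)"
        by (rule Flip[OF upd_space[OF x] upd_space[OF x']])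
      also have "\<dots> = ?S" by (simp only: sumeq) simp
      finally show "F (x(i:=y)) \<le> F (x'(i:=y)) + ?S" by linarith
    qed
    also have "\<dots> = G x' + ?S"
      unfolding G_def using gint[OF x'] Ni.prob_space by simp
    finally show ?thesis .
  qed
  have Glip: "\<bar>G x - G x'\<bar> \<le> (\<Sum>j\<in>I. c j * \<bar>x j - x' j\<bar>)"
    if x: "x \<in> space (PiM I NN)" and x': "x' \<in> space (PiM I NN)" for x x'
  proof -
    have "(\<Sum>j\<in>I. c j * \<bar>x' j - x j\<bar>) = (\<Sum>j\<in>I. c j * \<bar>x j - x' j\<bar>)"
      by (simp add: abs_minus_commute)
    then show ?thesis using Gle[OF x x'] Gle[OF x' x] by linarith
  qed
  have IHG: "integrable (PiM I NN) G \<and>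
     (\<forall>l. (\<integral>\<^sup>+x. ennreal (exp (l * (G x - (\<integral>x. G x \<partial>PiM I NN)))) \<partial>PiM I NN) \<le> ennreal (exp (l^2 * (\<Sum>i\<in>I. (c i)^2 * (sg i)^2))))"
    by (rule insert.IH[OF Gm Glip])
  define F' where "F' = (\<lambda>x. F (x(i := mu i)))"
  have F'm: "F' \<in> borel_measurable (PiM I NN)"
  proof -
    have "(\<lambda>x. x(i := mu i)) \<in> measurable (PiM I NN) (PiM (insert i I) NN)"
      by (rule measurable_fun_upd[where J=I]) (auto simp: NN)
    then show ?thesis unfolding F'_def by (rule measurable_compose) (rule Fm)
  qed
  have F'lip: "\<bar>F' x - F' x'\<bar> \<le> (\<Sum>j\<in>I. c j * \<bar>x j - x' j\<bar>)"
    if x: "x \<in> space (PiM I NN)" and x': "x' \<in> space (PiM I NN)" for x x'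
  proof -
    have "\<bar>F' x - F' x'\<bar> \<le> (\<Sum>j\<in>insert i I. c j * \<bar>(x(i:=mu i)) j - (x'(i:=mu i)) j\<bar>)"
      unfolding F'_def by (rule Flip[OF upd_space[OF x] upd_space[OF x']])
    also have "\<dots> = (\<Sum>j\<in>I. c j * \<bar>x j - x' j\<bar>)" by (simp only: sumeq) simp
    finally show ?thesis .
  qed
  have F'int: "integrable (PiM I NN) F'"
    using insert.IH[OF F'm F'lip] by blast
  have idint: "integrable (NN i) (\<lambda>y. y - mu i)"
    using lip1d(1)[OF sg[of i], of 1 "\<lambda>y. y - mu i" "mu i"] unfolding NN by simp
  have sNN[measurable_cong]: "sets (NN j) = sets borel" for j by (simp add: NN)
  have em1: "emeasure (NN i) UNIV = 1" using Ni.emeasure_space_1 spN by simp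
  define K where "K = (\<integral>\<^sup>+y. ennreal \<bar>y - mu i\<bar> \<partial>NN i)"
  have Kfin: "K < \<infinity>"
    unfolding K_def by (rule nn_abs_fin[OF idint])
  have Fint: "integrable (PiM (insert i I) NN) F"
  proof (rule integrableI_bounded)
    show "F \<in> borel_measurable (PiM (insert i I) NN)" by (rule Fm)
    have "(\<integral>\<^sup>+x. ennreal (norm (F x)) \<partial>PiM (insert i I) NN) =
        (\<integral>\<^sup>+x. (\<integral>\<^sup>+y. ennreal (norm (F (x(i:=y)))) \<partial>NN i) \<partial>PiM I NN)"
      by (rule PSF.product_nn_integral_insert[OF insert.hyps(1,2)]) measurable
    also have "\<dots> \<le> (\<integral>\<^sup>+x. (\<integral>\<^sup>+y. ennreal \<bar>F' x\<bar> + ennreal (c i) * ennreal \<bar>y - mu i\<bar> \<partial>NN i) \<partial>PiM I NN)"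
    proof (intro nn_integral_mono)
      fix x y assume x: "x \<in> space (PiM I NN)"
      have "\<bar>F (x(i:=y))\<bar> \<le> \<bar>F' x\<bar> + c i * \<bar>y - mu i\<bar>"
        using glip[OF x, of y "mu i"] unfolding F'_def by linarith
      then show "ennreal (norm (F (x(i:=y)))) \<le> ennreal \<bar>F' x\<bar> + ennreal (c i) * ennreal \<bar>y - mu i\<bar>"
        using c[of i] by (simp add: ennreal_mult[symmetric] ennreal_plus[symmetric] del: ennreal_plus)
    qed
    also have "\<dots> = (\<integral>\<^sup>+x. ennreal \<bar>F' x\<bar> + ennreal (c i) * K \<partial>PiM I NN)"
    proof (intro nn_integral_cong)
      fix x
      show "(\<integral>\<^sup>+y. ennreal \<bar>F' x\<bar> + ennreal (c i) * ennreal \<bar>y - mu i\<bar> \<partial>NN i) = ennreal \<bar>F' x\<bar> + ennreal (c i) * K"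
        unfolding K_def
        by (subst nn_integral_add) (auto simp: nn_integral_cmult em1 spN)
    qed
    also have "\<dots> = (\<integral>\<^sup>+x. ennreal \<bar>F' x\<bar> \<partial>PiM I NN) + ennreal (c i) * K"
      using F'm by (subst nn_integral_add) (auto simp: PI.emeasure_space_1)
    also have "\<dots> < \<infinity>"
      using nn_abs_fin[OF F'int] Kfin by (simp add: ennreal_mult_less_top)
    finally show "(\<integral>\<^sup>+x. ennreal (norm (F x)) \<partial>PiM (insert i I) NN) < \<infinity>" .
  qed
  have mG: "(\<integral>x. F x \<partial>PiM (insert i I) NN) = (\<integral>x. G x \<partial>PiM I NN)"
    unfolding G_def by (rule PSF.product_integral_insert[OF insert.hyps(1,2) Fint])
  have Gint: "integrable (PiM I NN) G" using IHG by blast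
  show ?case
  proof (intro conjI allI)
    show "integrable (PiM (insert i I) NN) F" by (rule Fint)
    fix l
    define mg where "mg = (\<integral>x. G x \<partial>PiM I NN)"
    define Ei where "Ei = ennreal (exp (l^2 * (c i)^2 * (sg i)^2))"
    have "(\<integral>\<^sup>+x. ennreal (exp (l * (F x - (\<integral>x. F x \<partial>PiM (insert i I) NN)))) \<partial>PiM (insert i I) NN)
        = (\<integral>\<^sup>+x. (\<integral>\<^sup>+y. ennreal (exp (l * (F (x(i:=y)) - mg))) \<partial>NN i) \<partial>PiM I NN)"
      unfolding mG mg_def by (rule PSF.product_nn_integral_insert[OF insert.hyps(1,2)]) measurable
    also have "\<dots> = (\<integral>\<^sup>+x. ennreal (exp (l * (G x - mg))) * (\<integral>\<^sup>+y. ennreal (exp (l * (F (x(i:=y)) - G x))) \<partial>NN i) \<partial>PiM I NN)"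
    proof (intro nn_integral_cong)
      fix x assume x: "x \<in> space (PiM I NN)"
      have "(\<integral>\<^sup>+y. ennreal (exp (l * (F (x(i:=y)) - mg))) \<partial>NN i)
          = (\<integral>\<^sup>+y. ennreal (exp (l * (G x - mg))) * ennreal (exp (l * (F (x(i:=y)) - G x))) \<partial>NN i)"
        by (intro nn_integral_cong) (simp add: ennreal_mult'[symmetric] mult_exp_exp algebra_simps)
      also have "\<dots> = ennreal (exp (l * (G x - mg))) * (\<integral>\<^sup>+y. ennreal (exp (l * (F (x(i:=y)) - G x))) \<partial>NN i)"
      proof (rule nn_integral_cmult)
        have "(\<lambda>y. x(i:=y)) \<in> measurable (NN i) (PiM (insert i I) NN)"
          by (rule measurable_component_update[OF x insert.hyps(2)])
        then have "(\<lambda>y. F (x(i:=y))) \<in> borel_measurable (NN i)"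
          by (rule measurable_compose) (rule Fm)
        then show "(\<lambda>y. ennreal (exp (l * (F (x(i:=y)) - G x)))) \<in> borel_measurable (NN i)"
          by measurable
      qed
      finally show "(\<integral>\<^sup>+y. ennreal (exp (l * (F (x(i:=y)) - mg))) \<partial>NN i)
          = ennreal (exp (l * (G x - mg))) * (\<integral>\<^sup>+y. ennreal (exp (l * (F (x(i:=y)) - G x))) \<partial>NN i)" .
    qed
    also have "\<dots> \<le> (\<integral>\<^sup>+x. ennreal (exp (l * (G x - mg))) * Ei \<partial>PiM I NN)"
      unfolding Ei_def by (intro nn_integral_mono mult_left_mono gmgf) auto
    also have "\<dots> = (\<integral>\<^sup>+x. ennreal (exp (l * (G x - mg))) \<partial>PiM I NN) * Ei"
      by (rule nn_integral_multc) measurable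
    also have "\<dots> \<le> ennreal (exp (l^2 * (\<Sum>i\<in>I. (c i)^2 * (sg i)^2))) * Ei"
      using IHG unfolding mg_def by (intro mult_right_mono) auto
    also have "\<dots> = ennreal (exp (l^2 * (\<Sum>i\<in>insert i I. (c i)^2 * (sg i)^2)))"
      unfolding Ei_def using insert.hyps
      by (simp add: ennreal_mult'[symmetric] mult_exp_exp algebra_simps)
    finally show "(\<integral>\<^sup>+x. ennreal (exp (l * (F x - (\<integral>x. F x \<partial>PiM (insert i I) NN)))) \<partial>PiM (insert i I) NN)
        \<le> ennreal (exp (l^2 * (\<Sum>i\<in>insert i I. (c i)^2 * (sg i)^2)))" .
  qed
qed


lemma chernoff_side:
  fixes F :: "'b \<Rightarrow> real"
  assumes P: "prob_space P" and Fm[measurable]: "F \<in> borel_measurable P"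
    and mgf: "\<And>l. (\<integral>\<^sup>+x. ennreal (exp (l * (F x - m))) \<partial>P) \<le> ennreal (exp (l^2 * v))"
    and v: "0 < v" and t: "0 < t" and sgn: "\<bar>s\<bar> = 1"
  shows "emeasure P {x\<in>space P. t \<le> s * (F x - m)} \<le> ennreal (exp (-(t^2) / (4 * v)))"
proof -
  define l where "l = t / (2 * v)"
  have l: "0 < l" using v t by (simp add: l_def)
  have "emeasure P {x\<in>space P. t \<le> s * (F x - m)} = (\<integral>\<^sup>+x. indicator {x\<in>space P. t \<le> s * (F x - m)} x \<partial>P)"
    by (rule nn_integral_indicator[symmetric]) measurable
  also have "\<dots> \<le> (\<integral>\<^sup>+x. ennreal (exp (-(l*t))) * ennreal (exp ((s*l) * (F x - m))) \<partial>P)"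
  proof (intro nn_integral_mono)
    fix x assume x: "x \<in> space P"
    show "indicator {x\<in>space P. t \<le> s * (F x - m)} x \<le> ennreal (exp (-(l*t))) * ennreal (exp ((s*l) * (F x - m)))"
    proof (cases "t \<le> s * (F x - m)")
      case True
      then have "l * t \<le> l * (s * (F x - m))" using l by (intro mult_left_mono) auto
      then have "0 \<le> -(l*t) + (s*l) * (F x - m)" by (simp add: algebra_simps)
      then have "1 \<le> exp (-(l*t)) * exp ((s*l) * (F x - m))"
        by (simp add: mult_exp_exp)
      then show ?thesis using True x
        by (simp add: ennreal_mult'[symmetric] indicator_def)
    qed (simp add: indicator_def)
  qed
  also have "\<dots> = ennreal (exp (-(l*t))) * (\<integral>\<^sup>+x. ennreal (exp ((s*l) * (F x - m))) \<partial>P)"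
    by (rule nn_integral_cmult) measurable
  also have "\<dots> \<le> ennreal (exp (-(l*t))) * ennreal (exp ((s*l)^2 * v))"
    by (intro mult_left_mono mgf) auto
  also have "(s*l)^2 = l^2" using sgn by (metis abs_mult_self_eq mult_1 power2_eq_square power_mult_distrib)
  also have "ennreal (exp (-(l*t))) * ennreal (exp (l^2 * v)) = ennreal (exp (-(t^2) / (4 * v)))"
  proof -
    have "-(l*t) + l^2 * v = -(t^2) / (4 * v)" unfolding l_def using v by (simp add: field_simps power2_eq_square)
    then show ?thesis by (simp add: ennreal_mult'[symmetric] mult_exp_exp)
  qed
  finally show ?thesis .
qed

lemma chernoff_two:
  fixes F :: "'b \<Rightarrow> real"
  assumes P: "prob_space P" and Fm[measurable]: "F \<in> borel_measurable P"
    and mgf: "\<And>l. (\<integral>\<^sup>+x. ennreal (exp (l * (F x - m))) \<partial>P) \<le> ennreal (exp (l^2 * v))"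
    and v: "0 < v" and t: "0 < t"
  shows "measure P {x\<in>space P. t \<le> \<bar>F x - m\<bar>} \<le> 2 * exp (-(t^2) / (4 * v))"
proof -
  interpret prob_space P by (rule P)
  have eq: "{x\<in>space P. t \<le> \<bar>F x - m\<bar>} = {x\<in>space P. t \<le> 1 * (F x - m)} \<union> {x\<in>space P. t \<le> (-1) * (F x - m)}"
    by auto
  have "emeasure P {x\<in>space P. t \<le> \<bar>F x - m\<bar>} \<le> emeasure P {x\<in>space P. t \<le> 1 * (F x - m)} + emeasure P {x\<in>space P. t \<le> (-1) * (F x - m)}"
    unfolding eq by (rule emeasure_subadditive) measurable
  also have "\<dots> \<le> ennreal (exp (-(t^2) / (4 * v))) + ennreal (exp (-(t^2) / (4 * v)))"
    by (intro add_mono chernoff_side[OF P Fm mgf v t]) auto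
  also have "\<dots> = ennreal (2 * exp (-(t^2) / (4 * v)))"
    by (simp add: ennreal_plus[symmetric] del: ennreal_plus)
  finally show ?thesis
    by (simp add: emeasure_eq_measure ennreal_le_iff)
qed


lemma gauss_tail:
  fixes M :: "'a measure" and I :: "'i set" and Z :: "'i \<Rightarrow> 'a \<Rightarrow> real" and F :: "('i \<Rightarrow> real) \<Rightarrow> real"
  assumes ps: "prob_space M" and fin: "finite I" and ne: "I \<noteq> {}"
    and sg: "\<And>i. 0 < sg i" and c: "\<And>i. 0 \<le> c i"
    and ind: "prob_space.indep_vars M (\<lambda>_. borel) Z I"
    and dist: "\<And>i. i \<in> I \<Longrightarrow> distributed M lborel (Z i) (normal_density (mu i) (sg i))"
    and Fm: "F \<in> borel_measurable (PiM I (\<lambda>_. borel))"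
    and Flip: "\<And>x y. x \<in> space (PiM I (\<lambda>_. borel)) \<Longrightarrow> y \<in> space (PiM I (\<lambda>_. borel)) \<Longrightarrow>
        \<bar>F x - F y\<bar> \<le> (\<Sum>i\<in>I. c i * \<bar>x i - y i\<bar>)"
    and vb: "(\<Sum>i\<in>I. (c i)^2 * (sg i)^2) \<le> v" and v: "0 < v" and t: "0 < t"
  shows "prob_space.prob M {\<omega> \<in> space M. t \<le> \<bar>F (\<lambda>i\<in>I. Z i \<omega>) - prob_space.expectation M (\<lambda>\<omega>. F (\<lambda>i\<in>I. Z i \<omega>))\<bar>}
     \<le> 2 * exp (-(t^2) / (4 * v))"
proof -
  interpret prob_space M by (rule ps)
  define NN where "NN = (\<lambda>i. NM (mu i) (sg i))"
  define \<Phi> where "\<Phi> = (\<lambda>\<omega>. \<lambda>i\<in>I. Z i \<omega>)"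
  have rv: "random_variable borel (Z i)" if "i \<in> I" for i
    using distributed_measurable[OF dist[OF that]] by simp
  have \<Phi>m: "\<Phi> \<in> measurable M (PiM I (\<lambda>_. borel))"
    unfolding \<Phi>_def by (intro measurable_restrict rv)
  have "distr M (PiM I (\<lambda>_. borel)) \<Phi> = PiM I (\<lambda>i. distr M borel (Z i))"
    unfolding \<Phi>_def using indep_vars_iff_distr_eq_PiM'[OF ne rv] ind by simp
  also have "\<dots> = PiM I NN"
  proof (rule PiM_cong)
    fix i assume i: "i \<in> I"
    have "distr M borel (Z i) = distr M lborel (Z i)" by (rule distr_cong) auto
    also have "\<dots> = density lborel (normal_density (mu i) (sg i))"
      by (rule distributed_distr_eq_density[OF dist[OF i]])
    finally show "distr M borel (Z i) = NN i" by (simp add: NN_def)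
  qed simp
  finally have D: "distr M (PiM I (\<lambda>_. borel)) \<Phi> = PiM I NN" .
  have spP: "space (PiM I NN) = space (PiM I (\<lambda>_. borel))"
    using D[symmetric] by simp
  have FmP: "F \<in> borel_measurable (PiM I NN)"
    using Fm unfolding D[symmetric] by simp
  have pc: "integrable (PiM I NN) F \<and>
     (\<forall>l. (\<integral>\<^sup>+x. ennreal (exp (l * (F x - (\<integral>x. F x \<partial>PiM I NN)))) \<partial>PiM I NN) \<le> ennreal (exp (l^2 * (\<Sum>i\<in>I. (c i)^2 * (sg i)^2))))"
    by (rule prod_conc[OF fin sg c NN_def FmP]) (use Flip spP in auto)
  define m where "m = (\<integral>x. F x \<partial>PiM I NN)"
  have mgf: "(\<integral>\<^sup>+x. ennreal (exp (l * (F x - m))) \<partial>PiM I NN) \<le> ennreal (exp (l^2 * v))" for l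
  proof -
    have "exp (l^2 * (\<Sum>i\<in>I. (c i)^2 * (sg i)^2)) \<le> exp (l^2 * v)"
      using vb by (simp add: mult_left_mono)
    then show ?thesis using pc unfolding m_def by (meson ennreal_leI order_trans)
  qed
  have PP: "prob_space (PiM I NN)"
    by (rule prob_space_PiM) (simp add: NN_def prob_space_normal_density sg)
  have ch: "measure (PiM I NN) {x\<in>space (PiM I NN). t \<le> \<bar>F x - m\<bar>} \<le> 2 * exp (-(t^2) / (4 * v))"
    by (rule chernoff_two[OF PP FmP mgf v t])
  have Em: "expectation (\<lambda>\<omega>. F (\<Phi> \<omega>)) = m"
    unfolding m_def D[symmetric] by (rule integral_distr[symmetric, OF \<Phi>m Fm])
  have "prob {\<omega> \<in> space M. t \<le> \<bar>F (\<Phi> \<omega>) - m\<bar>} = measure (PiM I NN) {x\<in>space (PiM I NN). t \<le> \<bar>F x - m\<bar>}"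
  proof -
    have "measure (PiM I NN) {x\<in>space (PiM I NN). t \<le> \<bar>F x - m\<bar>}
        = prob (\<Phi> -` {x\<in>space (PiM I NN). t \<le> \<bar>F x - m\<bar>} \<inter> space M)"
      unfolding D[symmetric] by (rule measure_distr[OF \<Phi>m]) (use Fm spP in \<open>simp add: D\<close>)
    also have "\<Phi> -` {x\<in>space (PiM I NN). t \<le> \<bar>F x - m\<bar>} \<inter> space M = {\<omega> \<in> space M. t \<le> \<bar>F (\<Phi> \<omega>) - m\<bar>}"
      using measurable_space[OF \<Phi>m] spP by auto
    finally show ?thesis by simp
  qed
  with ch Em show ?thesis unfolding \<Phi>_def by simp
qed

lemma real_choose2: "n \<ge> 1 \<Longrightarrow> real (n choose 2) = real n * (real n - 1) / 2"
proof -
  assume n: "n \<ge> 1"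
  have "even (n * (n - 1))" by (cases "even n") auto
  then have "real (n * (n - 1) div 2) = real (n * (n - 1)) / 2"
    by (subst real_of_nat_div) auto
  then show ?thesis using n by (simp add: choose_two of_nat_diff)
qed

lemma lipD': "L-lipschitz_on UNIV f \<Longrightarrow> \<bar>f x - f y\<bar> \<le> L * \<bar>(x::real) - y\<bar>"
  using lipschitz_onD[of L UNIV f x y] by (simp add: dist_real_def)

lemma u_lip:
  fixes a b :: "nat \<Rightarrow> real" and f :: "real \<Rightarrow> real"
  assumes lip: "L-lipschitz_on UNIV f" and n: "2 \<le> n"
  shows "\<bar>(\<Sum>i<n. \<Sum>j\<in>{i<..<n}. f (a i - a j)) / real (n choose 2) - (\<Sum>i<n. \<Sum>j\<in>{i<..<n}. f (b i - b j)) / real (n choose 2)\<bar>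
     \<le> (4 * L / (real n - 1)) * (\<Sum>i<n. \<bar>a i - b i\<bar>)"
proof -
  have L: "0 \<le> L" using lipschitz_on_nonneg[OF lip] .
  define d where "d = (\<lambda>i. \<bar>a i - b i\<bar>)"
  have d0: "0 \<le> d i" for i by (simp add: d_def)
  have C: "real (n choose 2) = real n * (real n - 1) / 2" using n by (intro real_choose2) auto
  have Cpos: "0 < real (n choose 2)" unfolding C using n by auto
  have pt: "\<bar>f (a i - a j) - f (b i - b j)\<bar> \<le> L * (d i + d j)" for i j
  proof -
    have "\<bar>f (a i - a j) - f (b i - b j)\<bar> \<le> L * \<bar>(a i - a j) - (b i - b j)\<bar>" by (rule lipD'[OF lip])
    also have "\<dots> \<le> L * (d i + d j)" unfolding d_def using L by (intro mult_left_mono) auto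
    finally show ?thesis .
  qed
  have "\<bar>(\<Sum>i<n. \<Sum>j\<in>{i<..<n}. f (a i - a j)) - (\<Sum>i<n. \<Sum>j\<in>{i<..<n}. f (b i - b j))\<bar>
      = \<bar>\<Sum>i<n. \<Sum>j\<in>{i<..<n}. f (a i - a j) - f (b i - b j)\<bar>"
    by (simp add: sum_subtractf)
  also have "\<dots> \<le> (\<Sum>i<n. \<Sum>j\<in>{i<..<n}. \<bar>f (a i - a j) - f (b i - b j)\<bar>)"
    by (rule order_trans[OF sum_abs]) (intro sum_mono sum_abs)
  also have "\<dots> \<le> (\<Sum>i<n. \<Sum>j\<in>{i<..<n}. L * (d i + d j))"
    by (intro sum_mono pt)
  also have "\<dots> \<le> (\<Sum>i<n. \<Sum>j<n. L * (d i + d j))"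
    by (intro sum_mono sum_mono2) (auto intro!: mult_nonneg_nonneg L add_nonneg_nonneg d0)
  also have "\<dots> = L * (2 * real n * (\<Sum>i<n. d i))"
    by (simp add: sum_distrib_left[symmetric] sum.distrib algebra_simps sum_distrib_right[symmetric])
  finally have A: "\<bar>(\<Sum>i<n. \<Sum>j\<in>{i<..<n}. f (a i - a j)) - (\<Sum>i<n. \<Sum>j\<in>{i<..<n}. f (b i - b j))\<bar>
      \<le> L * (2 * real n * (\<Sum>i<n. d i))" .
  have "\<bar>(\<Sum>i<n. \<Sum>j\<in>{i<..<n}. f (a i - a j)) / real (n choose 2) - (\<Sum>i<n. \<Sum>j\<in>{i<..<n}. f (b i - b j)) / real (n choose 2)\<bar>
     = \<bar>(\<Sum>i<n. \<Sum>j\<in>{i<..<n}. f (a i - a j)) - (\<Sum>i<n. \<Sum>j\<in>{i<..<n}. f (b i - b j))\<bar> / real (n choose 2)"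
    using Cpos by (simp add: diff_divide_distrib[symmetric])
  also have "\<dots> \<le> L * (2 * real n * (\<Sum>i<n. d i)) / real (n choose 2)"
    using Cpos A by (simp add: divide_right_mono)
  also have "\<dots> = (4 * L / (real n - 1)) * (\<Sum>i<n. d i)"
    unfolding C using n by (simp add: field_simps)
  finally show ?thesis unfolding d_def .
qed

lemma t12_lip:
  fixes a b a' b' :: "nat \<Rightarrow> real" and f :: "real \<Rightarrow> real"
  assumes lip: "L-lipschitz_on UNIV f" and n1: "1 \<le> n1" and n2: "1 \<le> n2"
  shows "\<bar>(\<Sum>i<n1. \<Sum>j<n2. f (a i - b j)) / (real n1 * real n2) - (\<Sum>i<n1. \<Sum>j<n2. f (a' i - b' j)) / (real n1 * real n2)\<bar>
     \<le> (\<Sum>i<n1. (L / real n1) * \<bar>a i - a' i\<bar>) + (\<Sum>j<n2. (L / real n2) * \<bar>b j - b' j\<bar>)"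
proof -
  have L: "0 \<le> L" using lipschitz_on_nonneg[OF lip] .
  have Cpos: "0 < real n1 * real n2" using n1 n2 by auto
  have pt: "\<bar>f (a i - b j) - f (a' i - b' j)\<bar> \<le> L * \<bar>a i - a' i\<bar> + L * \<bar>b j - b' j\<bar>" for i j
  proof -
    have "\<bar>f (a i - b j) - f (a' i - b' j)\<bar> \<le> L * \<bar>(a i - b j) - (a' i - b' j)\<bar>" by (rule lipD'[OF lip])
    also have "\<dots> \<le> L * (\<bar>a i - a' i\<bar> + \<bar>b j - b' j\<bar>)" using L by (intro mult_left_mono) auto
    finally show ?thesis by (simp add: algebra_simps)
  qed
  have "\<bar>(\<Sum>i<n1. \<Sum>j<n2. f (a i - b j)) - (\<Sum>i<n1. \<Sum>j<n2. f (a' i - b' j))\<bar>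
      = \<bar>\<Sum>i<n1. \<Sum>j<n2. f (a i - b j) - f (a' i - b' j)\<bar>"
    by (simp add: sum_subtractf)
  also have "\<dots> \<le> (\<Sum>i<n1. \<Sum>j<n2. \<bar>f (a i - b j) - f (a' i - b' j)\<bar>)"
    by (rule order_trans[OF sum_abs]) (intro sum_mono sum_abs)
  also have "\<dots> \<le> (\<Sum>i<n1. \<Sum>j<n2. L * \<bar>a i - a' i\<bar> + L * \<bar>b j - b' j\<bar>)"
    by (intro sum_mono pt)
  also have "\<dots> = real n2 * L * (\<Sum>i<n1. \<bar>a i - a' i\<bar>) + real n1 * L * (\<Sum>j<n2. \<bar>b j - b' j\<bar>)"
    by (simp add: sum.distrib sum_distrib_left algebra_simps sum.swap[of _ "{..<n1}"])
  finally have A: "\<bar>(\<Sum>i<n1. \<Sum>j<n2. f (a i - b j)) - (\<Sum>i<n1. \<Sum>j<n2. f (a' i - b' j))\<bar>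
      \<le> real n2 * L * (\<Sum>i<n1. \<bar>a i - a' i\<bar>) + real n1 * L * (\<Sum>j<n2. \<bar>b j - b' j\<bar>)" .
  have "\<bar>(\<Sum>i<n1. \<Sum>j<n2. f (a i - b j)) / (real n1 * real n2) - (\<Sum>i<n1. \<Sum>j<n2. f (a' i - b' j)) / (real n1 * real n2)\<bar>
     = \<bar>(\<Sum>i<n1. \<Sum>j<n2. f (a i - b j)) - (\<Sum>i<n1. \<Sum>j<n2. f (a' i - b' j))\<bar> / (real n1 * real n2)"
    using Cpos by (simp add: diff_divide_distrib[symmetric])
  also have "\<dots> \<le> (real n2 * L * (\<Sum>i<n1. \<bar>a i - a' i\<bar>) + real n1 * L * (\<Sum>j<n2. \<bar>b j - b' j\<bar>)) / (real n1 * real n2)"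
    using Cpos A by (simp add: divide_right_mono)
  also have "\<dots> = (\<Sum>i<n1. (L / real n1) * \<bar>a i - a' i\<bar>) + (\<Sum>j<n2. (L / real n2) * \<bar>b j - b' j\<bar>)"
    unfolding sum_distrib_left[symmetric] using n1 n2 by (simp add: field_simps)
  finally show ?thesis .
qed


lemma sum_weights:
  fixes e :: "nat \<Rightarrow> 'i" and K :: real and w :: "'i \<Rightarrow> real"
  assumes fin: "finite I" and e: "inj e" and eI: "\<And>i. i < n \<Longrightarrow> e i \<in> I"
  shows "(\<Sum>z\<in>I. (if z \<in> e ` {..<n} then K else 0) * w z) = K * (\<Sum>i<n. w (e i))"
proof -
  have "(\<Sum>z\<in>I. (if z \<in> e ` {..<n} then K else 0) * w z) = (\<Sum>z\<in>e ` {..<n}. (if z \<in> e ` {..<n} then K else 0) * w z)"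
    by (rule sum.mono_neutral_right) (use fin eI in auto)
  also have "\<dots> = (\<Sum>i<n. (if e i \<in> e ` {..<n} then K else 0) * w (e i))"
    by (rule sum.reindex_cong[of e]) (use e in \<open>auto simp: inj_on_def inj_def\<close>)
  also have "\<dots> = K * (\<Sum>i<n. w (e i))"
    by (simp add: sum_distrib_left)
  finally show ?thesis .
qed

lemma T11_tail:
  fixes M :: "'a measure" and I :: "'i set" and Z :: "'i \<Rightarrow> 'a \<Rightarrow> real" and e :: "nat \<Rightarrow> 'i"
    and X :: "nat \<Rightarrow> 'a \<Rightarrow> real" and f :: "real \<Rightarrow> real"
  assumes ps: "prob_space M" and fin: "finite I"
    and sg: "\<And>i. 0 < sg i"
    and ind: "prob_space.indep_vars M (\<lambda>_. borel) Z I"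
    and dist: "\<And>i. i \<in> I \<Longrightarrow> distributed M lborel (Z i) (normal_density (mu i) (sg i))"
    and e: "inj e" and eI: "\<And>i. i < n \<Longrightarrow> e i \<in> I" and XZ: "\<And>i. X i = Z (e i)"
    and sgb: "\<And>i. i < n \<Longrightarrow> (sg (e i))^2 \<le> \<sigma>0^2" and n: "2 \<le> n" and L: "0 \<le> L"
    and lip: "L-lipschitz_on UNIV f" and t: "0 < t"
  shows "prob_space.prob M {\<omega> \<in> space M. \<bar>T11 f n X \<omega> - prob_space.expectation M (T11 f n X)\<bar> \<ge> t}
     \<le> 2 * exp (- real n * t^2 / (256 * L^2 * \<sigma>0^2 + 1))"
proof -
  define K where "K = 4 * L / (real n - 1)"
  define c where "c = (\<lambda>z. if z \<in> e ` {..<n} then K else 0)"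
  define F where "F = (\<lambda>x::'i \<Rightarrow> real. (\<Sum>i<n. \<Sum>j\<in>{i<..<n}. f (x (e i) - x (e j))) / real (n choose 2))"
  define B where "B = 256 * L^2 * \<sigma>0^2 + 1"
  define v where "v = B / (4 * real n)"
  have K0: "0 \<le> K" unfolding K_def using L n by auto
  have c0: "0 \<le> c z" for z unfolding c_def using K0 by auto
  have ne: "I \<noteq> {}" using eI[of 0] n by auto
  have fm[measurable]: "f \<in> borel_measurable borel"
    by (intro borel_measurable_continuous_onI lipschitz_on_continuous_on[OF lip])
  have Fm: "F \<in> borel_measurable (PiM I (\<lambda>_. borel))"
    unfolding F_def
    by (intro borel_measurable_divide borel_measurable_sum measurable_compose[OF _ fm] borel_measurable_diff
        measurable_component_singleton) (auto intro: eI)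
  have Flip: "\<bar>F x - F y\<bar> \<le> (\<Sum>z\<in>I. c z * \<bar>x z - y z\<bar>)" for x y
  proof -
    have "\<bar>F x - F y\<bar> \<le> K * (\<Sum>i<n. \<bar>x (e i) - y (e i)\<bar>)"
      unfolding F_def K_def using u_lip[OF lip n, of "\<lambda>i. x (e i)" "\<lambda>i. y (e i)"] by simp
    also have "\<dots> = (\<Sum>z\<in>I. c z * \<bar>x z - y z\<bar>)"
      unfolding c_def by (rule sum_weights[OF fin e eI, symmetric])
    finally show ?thesis .
  qed
  have vb: "(\<Sum>z\<in>I. (c z)^2 * (sg z)^2) \<le> v"
  proof -
    have "(\<Sum>z\<in>I. (c z)^2 * (sg z)^2) = (\<Sum>z\<in>I. c z * (c z * (sg z)^2))"
      by (simp add: power2_eq_square algebra_simps)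
    also have "\<dots> = K * (\<Sum>i<n. c (e i) * (sg (e i))^2)"
      unfolding c_def by (rule sum_weights[OF fin e eI])
    also have "\<dots> = K * (\<Sum>i<n. K * (sg (e i))^2)"
      unfolding c_def by simp
    also have "\<dots> \<le> K * (\<Sum>i<n. K * \<sigma>0^2)"
      using K0 sgb by (intro mult_left_mono sum_mono) auto
    also have "\<dots> = 16 * L^2 * \<sigma>0^2 * (real n / (real n - 1)^2)"
      unfolding K_def using n by (simp add: field_simps power2_eq_square)
    also have "\<dots> \<le> 16 * L^2 * \<sigma>0^2 * (4 / real n)"
    proof (intro mult_left_mono)
      have "real n \<le> 2 * (real n - 1)" using n by simp
      then have "real n * real n \<le> (2 * (real n - 1)) * (2 * (real n - 1))"
        using n by (intro mult_mono) auto
      then show "real n / (real n - 1)^2 \<le> 4 / real n"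
        using n by (simp add: field_simps power2_eq_square)
    qed auto
    also have "\<dots> \<le> v"
      unfolding v_def B_def using n by (simp add: field_simps)
    finally show ?thesis .
  qed
  have vpos: "0 < v" unfolding v_def B_def using n by (auto intro!: divide_pos_pos add_nonneg_pos)
  have main: "prob_space.prob M {\<omega> \<in> space M. t \<le> \<bar>F (\<lambda>i\<in>I. Z i \<omega>) - prob_space.expectation M (\<lambda>\<omega>. F (\<lambda>i\<in>I. Z i \<omega>))\<bar>}
     \<le> 2 * exp (-(t^2) / (4 * v))"
    by (rule gauss_tail[OF ps fin ne sg c0 ind dist Fm Flip vb vpos t])
  have TF: "T11 f n X = (\<lambda>\<omega>. F (\<lambda>i\<in>I. Z i \<omega>))"
    unfolding T11_def F_def
    by (intro ext arg_cong2[where f="(/)"] refl sum.cong) (auto simp: XZ eI)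
  have ex: "-(t^2) / (4 * v) = - real n * t^2 / B"
    unfolding v_def using n by (simp add: field_simps)
  show ?thesis using main unfolding TF ex B_def by simp
qed


lemma main8:
  fixes M :: "'a measure" and f :: "real \<Rightarrow> real" and L \<sigma>0 :: real
  assumes L: "0 \<le> L" and tsn: "two_sample_normal M n1 n2 X Y mu1 s1 mu2 s2"
    and s1b: "s1^2 \<le> \<sigma>0^2" and s2b: "s2^2 \<le> \<sigma>0^2"
    and n1: "2 \<le> n1" and n2: "2 \<le> n2" and lip: "L-lipschitz_on UNIV f" and t: "0 < t"
  shows "prob_space.prob M {\<omega> \<in> space M. \<bar>T11 f n1 X \<omega> - prob_space.expectation M (T11 f n1 X)\<bar> \<ge> t}
        \<le> 2 * exp (- real n1 * t\<^sup>2 / (256 * L^2 * \<sigma>0^2 + 1))"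
    and "prob_space.prob M {\<omega> \<in> space M. \<bar>T11 f n2 Y \<omega> - prob_space.expectation M (T11 f n2 Y)\<bar> \<ge> t}
        \<le> 2 * exp (- real n2 * t\<^sup>2 / (256 * L^2 * \<sigma>0^2 + 1))"
    and "prob_space.prob M {\<omega> \<in> space M. \<bar>T12 f n1 n2 X Y \<omega> - prob_space.expectation M (T12 f n1 n2 X Y)\<bar> \<ge> t}
        \<le> 2 * exp (- real (min n1 n2) * t\<^sup>2 / (8 * L^2 * \<sigma>0^2 + 1))"
proof -
  define I where "I = {..<n1} <+> {..<n2}"
  define Z where "Z = (\<lambda>z. case z of Inl i \<Rightarrow> X i | Inr j \<Rightarrow> Y j)"
  define mu where "mu = (\<lambda>z::nat+nat. case z of Inl i \<Rightarrow> mu1 | Inr j \<Rightarrow> mu2)"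
  define sg where "sg = (\<lambda>z::nat+nat. case z of Inl i \<Rightarrow> s1 | Inr j \<Rightarrow> s2)"
  have ps: "prob_space M" and s1: "0 < s1" and s2: "0 < s2"
    and dX: "\<And>i. i < n1 \<Longrightarrow> distributed M lborel (X i) (normal_density mu1 s1)"
    and dY: "\<And>j. j < n2 \<Longrightarrow> distributed M lborel (Y j) (normal_density mu2 s2)"
    and ind: "prob_space.indep_vars M (\<lambda>_. borel) Z I"
    using tsn unfolding two_sample_normal_def Z_def I_def by auto
  have fin: "finite I" unfolding I_def by simp
  have sg: "\<And>z. 0 < sg z" unfolding sg_def using s1 s2 by (auto split: sum.split)
  have dist: "\<And>z. z \<in> I \<Longrightarrow> distributed M lborel (Z z) (normal_density (mu z) (sg z))"
    unfolding I_def Z_def mu_def sg_def using dX dY by auto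
  show "prob_space.prob M {\<omega> \<in> space M. \<bar>T11 f n1 X \<omega> - prob_space.expectation M (T11 f n1 X)\<bar> \<ge> t}
        \<le> 2 * exp (- real n1 * t\<^sup>2 / (256 * L^2 * \<sigma>0^2 + 1))"
    by (rule T11_tail[OF ps fin sg ind dist, of Inl]) (auto simp: I_def Z_def sg_def s1b n1 L lip t)
  show "prob_space.prob M {\<omega> \<in> space M. \<bar>T11 f n2 Y \<omega> - prob_space.expectation M (T11 f n2 Y)\<bar> \<ge> t}
        \<le> 2 * exp (- real n2 * t\<^sup>2 / (256 * L^2 * \<sigma>0^2 + 1))"
    by (rule T11_tail[OF ps fin sg ind dist, of Inr]) (auto simp: I_def Z_def sg_def s2b n2 L lip t)
  show "prob_space.prob M {\<omega> \<in> space M. \<bar>T12 f n1 n2 X Y \<omega> - prob_space.expectation M (T12 f n1 n2 X Y)\<bar> \<ge> t}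
        \<le> 2 * exp (- real (min n1 n2) * t\<^sup>2 / (8 * L^2 * \<sigma>0^2 + 1))"
  proof -
    define c where "c = (\<lambda>z::nat+nat. case z of Inl i \<Rightarrow> L / real n1 | Inr j \<Rightarrow> L / real n2)"
    define F where "F = (\<lambda>x::nat+nat \<Rightarrow> real. (\<Sum>i<n1. \<Sum>j<n2. f (x (Inl i) - x (Inr j))) / (real n1 * real n2))"
    define m where "m = min n1 n2"
    define B where "B = 8 * L^2 * \<sigma>0^2 + 1"
    define v where "v = B / (4 * real m)"
    have m2: "2 \<le> m" using n1 n2 by (simp add: m_def)
    have c0: "0 \<le> c z" for z unfolding c_def using L by (auto split: sum.split)
    have "Inl 0 \<in> I" using n1 unfolding I_def by (intro InlI) simp
    then have ne: "I \<noteq> {}" by auto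
    have fm[measurable]: "f \<in> borel_measurable borel"
      by (intro borel_measurable_continuous_onI lipschitz_on_continuous_on[OF lip])
    have Fm: "F \<in> borel_measurable (PiM I (\<lambda>_. borel))"
      unfolding F_def
      by (intro borel_measurable_divide borel_measurable_sum measurable_compose[OF _ fm] borel_measurable_diff
          measurable_component_singleton) (auto simp: I_def)
    have sumI: "(\<Sum>z\<in>I. g z) = (\<Sum>i<n1. g (Inl i)) + (\<Sum>j<n2. g (Inr j))" for g :: "nat+nat \<Rightarrow> real"
      unfolding I_def by (simp add: sum.Plus)
    have Flip: "\<bar>F x - F y\<bar> \<le> (\<Sum>z\<in>I. c z * \<bar>x z - y z\<bar>)" for x y
      unfolding sumI F_def c_def
      using t12_lip[OF lip, of n1 n2 "\<lambda>i. x (Inl i)" "\<lambda>j. x (Inr j)" "\<lambda>i. y (Inl i)" "\<lambda>j. y (Inr j)"] n1 n2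
      by simp
    have vb: "(\<Sum>z\<in>I. (c z)^2 * (sg z)^2) \<le> v"
    proof -
      have "(\<Sum>z\<in>I. (c z)^2 * (sg z)^2) = real n1 * ((L / real n1)^2 * s1^2) + real n2 * ((L / real n2)^2 * s2^2)"
        unfolding sumI c_def sg_def by simp
      also have "\<dots> = L^2 * s1^2 / real n1 + L^2 * s2^2 / real n2"
        using n1 n2 by (simp add: field_simps power2_eq_square)
      also have "\<dots> \<le> L^2 * \<sigma>0^2 / real m + L^2 * \<sigma>0^2 / real m"
      proof (intro add_mono)
        show "L^2 * s1^2 / real n1 \<le> L^2 * \<sigma>0^2 / real m"
          using s1b m2 by (intro frac_le mult_left_mono) (auto simp: m_def)
        show "L^2 * s2^2 / real n2 \<le> L^2 * \<sigma>0^2 / real m"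
          using s2b m2 by (intro frac_le mult_left_mono) (auto simp: m_def)
      qed
      also have "\<dots> \<le> v"
        unfolding v_def B_def using m2 by (simp add: field_simps)
      finally show ?thesis .
    qed
    have vpos: "0 < v" unfolding v_def B_def using m2 by (auto intro!: divide_pos_pos add_nonneg_pos)
    have main: "prob_space.prob M {\<omega> \<in> space M. t \<le> \<bar>F (\<lambda>i\<in>I. Z i \<omega>) - prob_space.expectation M (\<lambda>\<omega>. F (\<lambda>i\<in>I. Z i \<omega>))\<bar>}
       \<le> 2 * exp (-(t^2) / (4 * v))"
      by (rule gauss_tail[OF ps fin ne sg c0 ind dist Fm Flip vb vpos t])
    have TF: "T12 f n1 n2 X Y = (\<lambda>\<omega>. F (\<lambda>i\<in>I. Z i \<omega>))"
      unfolding T12_def F_def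
      by (intro ext arg_cong2[where f="(/)"] refl sum.cong) (auto simp: I_def Z_def)
    have ex: "-(t^2) / (4 * v) = - real m * t^2 / B"
      unfolding v_def using m2 by (simp add: field_simps)
    show ?thesis using main unfolding TF ex B_def m_def by simp
  qed
qed

theorem lemma8:
  fixes L \<sigma>0 :: real
  assumes "0 \<le> L" and "0 < \<sigma>0"
  shows "\<exists>B1>0. \<exists>B2>0. \<forall>(M :: 'a measure) n1 n2 X Y mu1 s1 mu2 s2 (f :: real \<Rightarrow> real) t.
    two_sample_normal M n1 n2 X Y mu1 s1 mu2 s2 \<and> s1\<^sup>2 \<le> \<sigma>0\<^sup>2 \<and> s2\<^sup>2 \<le> \<sigma>0\<^sup>2 \<and>
    2 \<le> n1 \<and> 2 \<le> n2 \<and> L-lipschitz_on UNIV f \<and> 0 < t \<longrightarrow>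
      prob_space.prob M {\<omega> \<in> space M. \<bar>T11 f n1 X \<omega> - prob_space.expectation M (T11 f n1 X)\<bar> \<ge> t}
        \<le> 2 * exp (- real n1 * t\<^sup>2 / B1) \<and>
      prob_space.prob M {\<omega> \<in> space M. \<bar>T11 f n2 Y \<omega> - prob_space.expectation M (T11 f n2 Y)\<bar> \<ge> t}
        \<le> 2 * exp (- real n2 * t\<^sup>2 / B1) \<and>
      prob_space.prob M {\<omega> \<in> space M. \<bar>T12 f n1 n2 X Y \<omega> - prob_space.expectation M (T12 f n1 n2 X Y)\<bar> \<ge> t}
        \<le> 2 * exp (- real (min n1 n2) * t\<^sup>2 / B2)"
proof -
  have B1: "0 < 256 * L^2 * \<sigma>0^2 + 1" by (simp add: add_nonneg_pos)
  have B2: "0 < 8 * L^2 * \<sigma>0^2 + 1" by (simp add: add_nonneg_pos)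
  show ?thesis
    apply (rule exI[of _ "256 * L^2 * \<sigma>0^2 + 1"])
    apply (rule conjI[OF B1])
    apply (rule exI[of _ "8 * L^2 * \<sigma>0^2 + 1"])
    apply (rule conjI[OF B2])
    apply (intro allI impI)
    apply (elim conjE)
    apply (intro conjI)
      apply (rule main8(1)[OF assms(1)]; assumption)
     apply (rule main8(2)[OF assms(1)]; assumption)
    apply (rule main8(3)[OF assms(1)]; assumption)
    done
qed

end
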